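(* For all positive integers $\Delta$ and positive reals $\nu$ there is $c$ such that if $p\ge c(\log n/n)^{1/\Delta}$, the following holds a.a.s. for $\Gamma=G(n,p)$ on vertex set $V$. Let $X$ be any subset of $V$ and $\mathcal{F}$ any family of pairwise disjoint $\Delta$-sets in $V\setminus X$. If $\nu n\le|X|\le|\mathcal{F}|\le n$, then $\mathrm{stars}_\Gamma(X,\mathcal{F})\le 7p^\Delta|X||\mathcal{F}|$.
   Context: $G(n,p)$ is the random graph on $[n]$ with edges present independently with probability $p$; a.a.s. means with probability tending to $1$ as $n\to\infty$ (simultaneously for all such $X,\mathcal{F}$). For a graph $G$, a vertex set $X$ and a family $\mathcal{F}$ of pairwise disjoint $\ell$-sets outside $X$, $\mathrm{stars}_G(X,\mathcal{F})$ is the number of pairs $(x,F)$ with $x\in X$, $F\in\mathcal{F}$ and $F\subseteq N_G(x)$. *)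

theory Defs
  imports "HOL-Probability.Probability"
begin

definition all_edges :: "nat \<Rightarrow> nat set set" where
  "all_edges n = {e. e \<subseteq> {..<n} \<and> card e = 2}"

text \<open>The binomial random graph G(n,p): each potential edge is present independently
  with probability p. A graph is represented by its edge indicator function
  (which is False outside all_edges n).\<close>
definition Gnp :: "nat \<Rightarrow> real \<Rightarrow> (nat set \<Rightarrow> bool) pmf" where
  "Gnp n p = Pi_pmf (all_edges n) False (\<lambda>_. bernoulli_pmf p)"

definition nbhd :: "(nat set \<Rightarrow> bool) \<Rightarrow> nat \<Rightarrow> nat set" where
  "nbhd G x = {y. y \<noteq> x \<and> G {x, y}}"

definition stars :: "(nat set \<Rightarrow> bool) \<Rightarrow> nat set \<Rightarrow> nat set set \<Rightarrow> nat" where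
  "stars G X \<F> = card {(x, F). x \<in> X \<and> F \<in> \<F> \<and> F \<subseteq> nbhd G x}"

definition stars_good :: "nat \<Rightarrow> real \<Rightarrow> nat \<Rightarrow> real \<Rightarrow> (nat set \<Rightarrow> bool) \<Rightarrow> bool" where
  "stars_good n p \<Delta> \<nu> G \<longleftrightarrow>
     (\<forall>X \<F>. X \<subseteq> {..<n} \<longrightarrow>
        (\<forall>F\<in>\<F>. F \<subseteq> {..<n} - X \<and> card F = \<Delta>) \<longrightarrow>
        pairwise disjnt \<F> \<longrightarrow>
        \<nu> * real n \<le> real (card X) \<longrightarrow> card X \<le> card \<F> \<longrightarrow> card \<F> \<le> n \<longrightarrow>
        real (stars G X \<F>) \<le> 7 * p ^ \<Delta> * real (card X) * real (card \<F>))"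

end

theory Submission
  imports Defs
begin


lemma pow_fact_le_exp:
  fixes x :: real assumes "0 \<le> x" shows "x ^ k / fact k \<le> exp x"
proof -
  have s: "(\<lambda>n. x^n /\<^sub>R fact n) sums exp x" by (rule exp_converges)
  have "(\<Sum>n\<in>{k}. x^n /\<^sub>R fact n) \<le> suminf (\<lambda>n. x^n /\<^sub>R fact n)"
    by (rule sum_le_suminf) (use s assms in \<open>auto simp: sums_iff\<close>)
  with s show ?thesis by (simp add: sums_iff divide_inverse mult.commute)
qed

lemma poisson_tail:
  fixes \<mu> :: real assumes "0 \<le> \<mu>" "7 * \<mu> \<le> real k"
  shows "\<mu> ^ k / fact k \<le> exp (- 4 * \<mu>)"
proof -
  have "(exp 1 * \<mu>) ^ k / fact k \<le> exp (exp 1 * \<mu>)"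
    by (rule pow_fact_le_exp) (use assms in auto)
  hence "exp 1 ^ k * (\<mu> ^ k / fact k) \<le> exp (exp 1 * \<mu>)"
    by (simp add: power_mult_distrib)
  hence "\<mu> ^ k / fact k \<le> exp (exp 1 * \<mu>) / exp 1 ^ k"
    by (simp add: field_simps)
  also have "\<dots> = exp (exp 1 * \<mu> - real k)"
    by (simp add: exp_diff exp_of_nat_mult[symmetric])
  also have "\<dots> \<le> exp (-4 * \<mu>)"
  proof -
    have "exp 1 * \<mu> \<le> 3 * \<mu>" by (rule mult_right_mono[OF exp_le]) (use assms in auto)
    thus ?thesis using assms by simp
  qed
  finally show ?thesis .
qed


lemma finite_all_edges: "finite (all_edges n)"
  by (rule finite_subset[of _ "Pow {..<n}"]) (auto simp: all_edges_def)

lemma prob_all_edges: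
  assumes "B \<subseteq> all_edges n" "0 \<le> p" "p \<le> 1"
  shows "measure_pmf.prob (Gnp n p) {G. \<forall>e\<in>B. G e} = p ^ card B"
proof -
  let ?E = "all_edges n"
  have eq: "{G. \<forall>e\<in>B. G e} = Pi ?E (\<lambda>e. if e \<in> B then {True} else UNIV)"
    using assms(1) by (auto simp: Pi_def)
  have "measure_pmf.prob (Gnp n p) {G. \<forall>e\<in>B. G e}
      = (\<Prod>e\<in>?E. measure_pmf.prob (bernoulli_pmf p) (if e \<in> B then {True} else UNIV))"
    unfolding eq Gnp_def by (rule measure_Pi_pmf_Pi) (rule finite_all_edges)
  also have "\<dots> = (\<Prod>e\<in>?E. if e \<in> B then p else 1)"
    by (intro prod.cong) (use assms in \<open>auto simp: measure_pmf_single\<close>)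
  also have "\<dots> = p ^ card B"
    using assms(1) finite_all_edges[of n]
    by (simp add: prod.If_cases Int_absorb1 Int_absorb2 Collect_mem_eq)
  finally show ?thesis .
qed


lemma pair_bound:
  assumes X: "X \<subseteq> {..<n}" and Fs: "\<forall>F\<in>\<F>. F \<subseteq> {..<n} - X \<and> card F = \<Delta>"
    and disj: "pairwise disjnt \<F>" and p: "0 \<le> p" "p \<le> 1"
  shows "measure_pmf.prob (Gnp n p) {G. real (stars G X \<F>) > 7 * p ^ \<Delta> * real (card X) * real (card \<F>)}
         \<le> exp (- 4 * (p ^ \<Delta> * real (card X) * real (card \<F>)))"
proof -
  define \<mu> where "\<mu> = p ^ \<Delta> * real (card X) * real (card \<F>)"
  have \<mu>0: "0 \<le> \<mu>" using p by (simp add: \<mu>_def)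
  define P where "P = X \<times> \<F>"
  have finF: "finite \<F>" proof (rule finite_subset[of _ "Pow {..<n}"])
    show "\<F> \<subseteq> Pow {..<n}" using Fs by blast
  qed simp
  have finX: "finite X" using X finite_subset by blast
  have finP: "finite P" using finF finX by (simp add: P_def)
  define SS where "SS G = {(x, F). x \<in> X \<and> F \<in> \<F> \<and> F \<subseteq> nbhd G x}" for G
  have SSP: "SS G \<subseteq> P" for G by (auto simp: SS_def P_def)
  define k where "k = nat \<lfloor>7 * \<mu>\<rfloor> + 1"
  have fl: "0 \<le> \<lfloor>7 * \<mu>\<rfloor>" using \<mu>0 by simp
  hence rk: "real k = of_int \<lfloor>7 * \<mu>\<rfloor> + 1" by (simp add: k_def)
  have k7: "7 * \<mu> \<le> real k" unfolding rk using real_of_int_floor_add_one_ge[of "7 * \<mu>"] by linarith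
  define Bs where "Bs T = (\<lambda>((x::nat,F::nat set),y::nat). {x,y}) ` (SIGMA z:T. snd z)" for T
  define \<T> where "\<T> = {T. T \<subseteq> P \<and> card T = k}"
  have finT: "finite \<T>" unfolding \<T>_def using finP by auto
  have sub: "{G. real (stars G X \<F>) > 7 * \<mu>} \<subseteq> (\<Union>T\<in>\<T>. {G. \<forall>e\<in>Bs T. G e})"
  proof
    fix G assume "G \<in> {G. real (stars G X \<F>) > 7 * \<mu>}"
    hence "real (card (SS G)) > 7 * \<mu>" by (simp add: stars_def SS_def)
    hence "\<lfloor>7 * \<mu>\<rfloor> < int (card (SS G))" by (simp add: floor_less_iff)
    hence "k \<le> card (SS G)" unfolding k_def using \<mu>0 by linarith
    then obtain T where T: "T \<subseteq> SS G" "card T = k" by (meson obtain_subset_with_card_n)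
    have "T \<in> \<T>" using T SSP by (auto simp: \<T>_def)
    moreover have "\<forall>e\<in>Bs T. G e"
    proof
      fix e assume "e \<in> Bs T"
      then obtain x F y where "(x,F) \<in> T" "y \<in> F" "e = {x,y}" by (auto simp: Bs_def)
      thus "G e" using T(1) by (auto simp: SS_def nbhd_def)
    qed
    ultimately show "G \<in> (\<Union>T\<in>\<T>. {G. \<forall>e\<in>Bs T. G e})" by blast
  qed
  have cardBs: "card (Bs T) = \<Delta> * card T" and BsE: "Bs T \<subseteq> all_edges n" if "T \<in> \<T>" for T
  proof -
    have TP: "T \<subseteq> P" using that by (auto simp: \<T>_def)
    have finT': "finite T" using TP finP finite_subset by blast
    have inj: "inj_on (\<lambda>((x::nat,F::nat set),y::nat). {x,y}) (SIGMA z:T. snd z)"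
    proof (rule inj_onI, clarsimp)
      fix x F y x' F' y'
      assume a: "(x,F) \<in> T" "y \<in> F" "(x',F') \<in> T" "y' \<in> F'" "{x,y} = {x',y'}"
      have xX: "x \<in> X" "x' \<in> X" "F \<in> \<F>" "F' \<in> \<F>" using a TP by (auto simp: P_def)
      have "y \<notin> X" "y' \<notin> X" using a xX Fs by auto
      hence xy: "x = x'" "y = y'" using a(5) xX by (auto simp: doubleton_eq_iff)
      have "F = F'"
      proof (rule ccontr)
        assume "F \<noteq> F'"
        hence "disjnt F F'" using disj xX by (auto simp: pairwise_def)
        thus False using a xy by (auto simp: disjnt_def)
      qed
      thus "x = x' \<and> F = F' \<and> y = y'" using xy by simp
    qed
    have "card (Bs T) = card (SIGMA z:T. snd z)" unfolding Bs_def by (rule card_image[OF inj])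
    also have "\<dots> = (\<Sum>z\<in>T. card (snd z))"
    proof (rule card_SigmaI[OF finT'], intro ballI)
      fix z assume "z \<in> T"
      with TP have "snd z \<in> \<F>" by (auto simp: P_def)
      hence "snd z \<subseteq> {..<n}" using Fs by blast
      thus "finite (snd z)" by (rule finite_subset) simp
    qed
    also have "\<dots> = (\<Sum>z\<in>T. \<Delta>)" using TP Fs by (intro sum.cong) (auto simp: P_def)
    finally show "card (Bs T) = \<Delta> * card T" by simp
    show "Bs T \<subseteq> all_edges n"
    proof
      fix e assume "e \<in> Bs T"
      then obtain x F y where a: "(x,F) \<in> T" "y \<in> F" "e = {x,y}" by (auto simp: Bs_def)
      have "x \<in> X" "F \<in> \<F>" using a TP by (auto simp: P_def)
      hence "x < n" "y < n" "x \<noteq> y" using a X Fs by auto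
      thus "e \<in> all_edges n" using a by (auto simp: all_edges_def)
    qed
  qed
  have "measure_pmf.prob (Gnp n p) {G. real (stars G X \<F>) > 7 * \<mu>}
        \<le> measure_pmf.prob (Gnp n p) (\<Union>T\<in>\<T>. {G. \<forall>e\<in>Bs T. G e})"
    by (rule measure_pmf.finite_measure_mono[OF sub]) simp
  also have "\<dots> \<le> (\<Sum>T\<in>\<T>. measure_pmf.prob (Gnp n p) {G. \<forall>e\<in>Bs T. G e})"
    by (rule measure_pmf.finite_measure_subadditive_finite[OF finT]) simp
  also have "\<dots> = (\<Sum>T\<in>\<T>. (p ^ \<Delta>) ^ k)"
  proof (intro sum.cong refl)
    fix T assume T: "T \<in> \<T>"
    show "measure_pmf.prob (Gnp n p) {G. \<forall>e\<in>Bs T. G e} = (p ^ \<Delta>) ^ k"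
      using prob_all_edges[OF BsE[OF T] p] cardBs[OF T] T by (simp add: \<T>_def power_mult)
  qed
  also have "\<dots> = real (card P choose k) * (p ^ \<Delta>) ^ k"
    by (simp add: \<T>_def n_subsets finP)
  also have "\<dots> \<le> (real (card P) ^ k / fact k) * (p ^ \<Delta>) ^ k"
  proof (rule mult_right_mono)
    have "real ((card P choose k) * fact k) \<le> real (card P ^ k)"
      by (subst of_nat_le_iff) (rule binomial_fact_pow)
    thus "real (card P choose k) \<le> real (card P) ^ k / fact k"
      by (simp add: field_simps)
  qed (use p in simp)
  also have "\<dots> = \<mu> ^ k / fact k"
    by (simp add: \<mu>_def P_def card_cartesian_product power_mult_distrib field_simps)
  also have "\<dots> \<le> exp (- 4 * \<mu>)" by (rule poisson_tail[OF \<mu>0 k7])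
  finally show ?thesis by (simp add: \<mu>_def mult.assoc)
qed


lemma card_small_subsets:
  assumes "finite D"
  shows "card {S. S \<subseteq> D \<and> card S \<le> m} \<le> (card D + 1) ^ m"
proof -
  define A where "A = ({..<m} \<rightarrow>\<^sub>E insert None (Some ` D))"
  define g where "g f = {d. Some d \<in> f ` {..<m}}" for f :: "nat \<Rightarrow> 'a option"
  have "{S. S \<subseteq> D \<and> card S \<le> m} \<subseteq> g ` A"
  proof
    fix S assume S: "S \<in> {S. S \<subseteq> D \<and> card S \<le> m}"
    have finS: "finite S" using S assms finite_subset by blast
    obtain h where h: "bij_betw h {0..<card S} S" using ex_bij_betw_nat_finite[OF finS] by blast
    define f where "f = (\<lambda>i. if i < m then (if i < card S then Some (h i) else None) else undefined)"
    have hD: "h i \<in> D" if "i < card S" for i using h S that by (auto simp: bij_betw_def)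
    have "f \<in> A" unfolding A_def
    proof (rule PiE_I)
      fix i assume "i \<in> {..<m}" thus "f i \<in> insert None (Some ` D)" using hD by (auto simp: f_def)
    next
      fix i assume "i \<notin> {..<m}" thus "f i = undefined" by (simp add: f_def)
    qed
    moreover have "g f = S"
    proof
      show "g f \<subseteq> S" using h by (auto simp: g_def f_def bij_betw_def split: if_splits)
      show "S \<subseteq> g f"
      proof
        fix d assume "d \<in> S"
        then obtain i where "i < card S" "h i = d" using h \<open>d \<in> S\<close> unfolding bij_betw_def by (metis atLeastLessThan_iff imageE)
        thus "d \<in> g f" using S by (auto simp: g_def f_def image_iff intro!: bexI[of _ i])
      qed
    qed
    ultimately show "S \<in> g ` A" by blast
  qed
  hence "card {S. S \<subseteq> D \<and> card S \<le> m} \<le> card (g ` A)"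
    by (rule card_mono[rotated]) (simp add: A_def assms finite_PiE)
  also have "\<dots> \<le> card A" by (rule card_image_le) (simp add: A_def assms finite_PiE)
  also have "card A = (card D + 1) ^ m"
    using assms by (simp add: A_def card_PiE card_image)
  finally show ?thesis .
qed


lemma bad_bound:
  fixes \<Delta> :: nat and \<nu> c q :: real
  assumes \<Delta>: "\<Delta> > 0" and \<nu>: "\<nu> > 0" and c: "c = 1 + (real \<Delta> + 2) / \<nu>\<^sup>2"
    and n: "n \<ge> 2" and q: "0 \<le> q" "q \<le> 1"
    and qb: "q \<ge> c * (ln (real n) / real n) powr (1 / real \<Delta>)"
  shows "measure_pmf.prob (Gnp n q) {G. \<not> stars_good n q \<Delta> \<nu> G} \<le> 4 / (real n)\<^sup>2"
proof -
  define t where "t = ln (real n) / real n"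
  have t0: "t > 0" using n by (simp add: t_def)
  have c1: "c \<ge> 1" using c \<nu> by simp
  have "(c * t powr (1 / real \<Delta>)) ^ \<Delta> \<le> q ^ \<Delta>"
    by (rule power_mono) (use qb c1 in \<open>auto simp: t_def\<close>)
  also have "(c * t powr (1 / real \<Delta>)) ^ \<Delta> = c ^ \<Delta> * t"
    using t0 \<Delta> by (simp add: power_mult_distrib powr_power)
  finally have qD: "c ^ \<Delta> * t \<le> q ^ \<Delta>" .
  have cD: "c \<le> c ^ \<Delta>" using power_increasing[of 1 \<Delta> c] \<Delta> c1 by simp
  have lnn: "0 \<le> real n * ln (real n)" using n by simp
  define L where "L = real n * ln (real n)"
  define Cands where "Cands = {(X, \<F>). X \<subseteq> {..<n} \<and> (\<forall>F\<in>\<F>. F \<subseteq> {..<n} - X \<and> card F = \<Delta>) \<and>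
      pairwise disjnt \<F> \<and> \<nu> * real n \<le> real (card X) \<and> card X \<le> card \<F> \<and> card \<F> \<le> n}"
  define D where "D = {F. F \<subseteq> {..<n} \<and> card F = \<Delta>}"
  define CC where "CC = {S. S \<subseteq> D \<and> card S \<le> n}"
  have finD: "finite D" by (simp add: D_def)
  have CandsS: "Cands \<subseteq> Pow {..<n} \<times> CC" by (auto simp: Cands_def CC_def D_def)
  have finCC: "finite CC" using finD by (simp add: CC_def)
  have finC: "finite Cands" using CandsS finCC by (meson finite_SigmaI finite_Pow_iff finite_lessThan finite_subset)
  have cardD: "card D \<le> n ^ \<Delta>"
  proof (cases "\<Delta> \<le> n")
    case True thus ?thesis using n_subsets[of "{..<n}" \<Delta>] binomial_le_pow[OF True] by (simp add: D_def)
  next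
    case False hence "card D = 0" using n_subsets[of "{..<n}" \<Delta>] by (simp only: D_def card_lessThan binomial_eq_0_iff) simp
    thus ?thesis by simp
  qed
  have cardC: "real (card Cands) \<le> (4 * real n ^ \<Delta>) ^ n"
  proof -
    have "card Cands \<le> card (Pow {..<n} \<times> CC)"
      by (rule card_mono) (use finCC CandsS in auto)
    also have "\<dots> = 2 ^ n * card CC" by (simp add: card_cartesian_product card_Pow)
    also have "\<dots> \<le> 2 ^ n * (card D + 1) ^ n"
      using card_small_subsets[OF finD, of n] by (simp add: CC_def)
    finally have "real (card Cands) \<le> 2 ^ n * (real (card D) + 1) ^ n"
      by (metis (mono_tags, lifting) of_nat_1 of_nat_add of_nat_le_iff of_nat_mult of_nat_numeral of_nat_power)
    also have "\<dots> \<le> 2 ^ n * (2 * real n ^ \<Delta>) ^ n"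
    proof -
      have a: "real (card D) \<le> real n ^ \<Delta>" using cardD by (metis of_nat_le_iff of_nat_power)
      have b: "1 \<le> real n ^ \<Delta>" using n by simp
      have "real (card D) + 1 \<le> 2 * real n ^ \<Delta>" using a b by linarith
      thus ?thesis by (intro mult_left_mono power_mono) auto
    qed
    also have "\<dots> = (4 * real n ^ \<Delta>) ^ n"
      by (simp add: power_mult_distrib flip: power_mult_distrib[of "2::real" 2 n])
    finally show ?thesis .
  qed
  have sub: "{G. \<not> stars_good n q \<Delta> \<nu> G} \<subseteq>
     (\<Union>z\<in>Cands. {G. real (stars G (fst z) (snd z)) > 7 * q ^ \<Delta> * real (card (fst z)) * real (card (snd z))})"
  proof
    fix G assume "G \<in> {G. \<not> stars_good n q \<Delta> \<nu> G}"
    then obtain X \<F> where h: "X \<subseteq> {..<n}" "\<forall>F\<in>\<F>. F \<subseteq> {..<n} - X \<and> card F = \<Delta>"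
      "pairwise disjnt \<F>" "\<nu> * real n \<le> real (card X)" "card X \<le> card \<F>" "card \<F> \<le> n"
      "\<not> real (stars G X \<F>) \<le> 7 * q ^ \<Delta> * real (card X) * real (card \<F>)"
      unfolding stars_good_def by blast
    have "(X, \<F>) \<in> Cands" using h(1-6) unfolding Cands_def by blast
    moreover have "real (stars G X \<F>) > 7 * q ^ \<Delta> * real (card X) * real (card \<F>)" using h(7) by simp
    ultimately show "G \<in> (\<Union>z\<in>Cands. {G. real (stars G (fst z) (snd z)) > 7 * q ^ \<Delta> * real (card (fst z)) * real (card (snd z))})"
      by force
  qed
  have each: "measure_pmf.prob (Gnp n q) {G. real (stars G (fst z) (snd z)) > 7 * q ^ \<Delta> * real (card (fst z)) * real (card (snd z))}
      \<le> exp (- ((real \<Delta> + 2) * L))" if z: "z \<in> Cands" for z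
  proof -
    obtain X \<F> where zz: "z = (X, \<F>)" by (cases z)
    have X: "X \<subseteq> {..<n}" "\<forall>F\<in>\<F>. F \<subseteq> {..<n} - X \<and> card F = \<Delta>" "pairwise disjnt \<F>"
      "\<nu> * real n \<le> real (card X)" "card X \<le> card \<F>" using z by (auto simp: Cands_def zz)
    have nn: "0 \<le> \<nu> * real n" using \<nu> by simp
    have XF: "(\<nu> * real n) * (\<nu> * real n) \<le> real (card X) * real (card \<F>)"
      using X(4,5) nn by (intro mult_mono) auto
    have "(real \<Delta> + 2) * L \<le> 4 * (c * \<nu>\<^sup>2) * L"
    proof (rule mult_right_mono)
      have "c * \<nu>\<^sup>2 = \<nu>\<^sup>2 + (real \<Delta> + 2)" using c \<nu> by (simp add: field_simps)
      moreover have "0 \<le> \<nu>\<^sup>2" by simp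
      ultimately show "real \<Delta> + 2 \<le> 4 * (c * \<nu>\<^sup>2)" by linarith
    qed (use lnn L_def in simp)
    also have "\<dots> \<le> 4 * (c ^ \<Delta> * \<nu>\<^sup>2) * L"
      using cD lnn L_def by (intro mult_right_mono mult_left_mono) auto
    also have "4 * (c ^ \<Delta> * \<nu>\<^sup>2) * L = 4 * ((c ^ \<Delta> * t) * ((\<nu> * real n) * (\<nu> * real n)))"
      using n by (simp add: L_def t_def power2_eq_square field_simps)
    also have "\<dots> \<le> 4 * (q ^ \<Delta> * (real (card X) * real (card \<F>)))"
      by (intro mult_left_mono mult_mono[OF qD XF]) (use t0 c1 nn q in auto)
    finally have le: "(real \<Delta> + 2) * L \<le> 4 * (q ^ \<Delta> * real (card X) * real (card \<F>))"
      by (simp add: mult.assoc)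
    have "measure_pmf.prob (Gnp n q) {G. real (stars G X \<F>) > 7 * q ^ \<Delta> * real (card X) * real (card \<F>)}
        \<le> exp (- 4 * (q ^ \<Delta> * real (card X) * real (card \<F>)))"
      by (rule pair_bound[OF X(1,2,3) q])
    also have "\<dots> \<le> exp (- ((real \<Delta> + 2) * L))" using le by simp
    finally show ?thesis by (simp add: zz)
  qed
  have "measure_pmf.prob (Gnp n q) {G. \<not> stars_good n q \<Delta> \<nu> G}
     \<le> measure_pmf.prob (Gnp n q) (\<Union>z\<in>Cands. {G. real (stars G (fst z) (snd z)) > 7 * q ^ \<Delta> * real (card (fst z)) * real (card (snd z))})"
    by (rule measure_pmf.finite_measure_mono[OF sub]) simp
  also have "\<dots> \<le> (\<Sum>z\<in>Cands. measure_pmf.prob (Gnp n q) {G. real (stars G (fst z) (snd z)) > 7 * q ^ \<Delta> * real (card (fst z)) * real (card (snd z))})"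
    by (rule measure_pmf.finite_measure_subadditive_finite[OF finC]) simp
  also have "\<dots> \<le> (\<Sum>z\<in>Cands. exp (- ((real \<Delta> + 2) * L)))"
    by (rule sum_mono) (rule each)
  also have "\<dots> = real (card Cands) * exp (- ((real \<Delta> + 2) * L))" by simp
  also have "\<dots> \<le> (4 * real n ^ \<Delta>) ^ n * exp (- ((real \<Delta> + 2) * L))"
    by (rule mult_right_mono[OF cardC]) simp
  also have "exp (- ((real \<Delta> + 2) * L)) = inverse (real n ^ (\<Delta> + 2)) ^ n"
  proof -
    have "exp ((real \<Delta> + 2) * L) = (real n ^ (\<Delta> + 2)) ^ n"
    proof -
      have "(real \<Delta> + 2) * L = real n * (real (\<Delta> + 2) * ln (real n))" by (simp add: L_def)
      hence "exp ((real \<Delta> + 2) * L) = exp (real (\<Delta> + 2) * ln (real n)) ^ n"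
        by (simp add: exp_of_nat_mult)
      also have "exp (real (\<Delta> + 2) * ln (real n)) = real n ^ (\<Delta> + 2)"
        using n by (subst exp_of_nat_mult) simp
      finally show ?thesis .
    qed
    thus ?thesis by (simp only: exp_minus power_inverse)
  qed
  also have "(4 * real n ^ \<Delta>) ^ n * inverse (real n ^ (\<Delta> + 2)) ^ n = (4 / (real n)\<^sup>2) ^ n"
  proof -
    have nz: "real n \<noteq> 0" using n by simp
    have "4 * real n ^ \<Delta> * inverse (real n ^ (\<Delta> + 2)) = 4 / (real n)\<^sup>2"
      using nz by (simp add: power_add field_simps power2_eq_square)
    thus ?thesis by (simp only: power_mult_distrib[symmetric])
  qed
  also have "\<dots> \<le> (4 / (real n)\<^sup>2) ^ 1"
  proof (rule power_decreasing)
    have "(2::real) \<le> real n" using n by simp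
    hence "(2::real)\<^sup>2 \<le> (real n)\<^sup>2" by (rule power_mono) simp
    thus "4 / (real n)\<^sup>2 \<le> 1" by (subst divide_le_eq_1) auto
  qed (use n in auto)
  finally show ?thesis by simp
qed


theorem lemma6p2:
  fixes \<Delta> :: nat and \<nu> :: real
  assumes "\<Delta> > 0" and "\<nu> > 0"
  shows "\<exists>c::real. \<forall>p :: nat \<Rightarrow> real.
           (\<forall>n. 0 \<le> p n \<and> p n \<le> 1) \<longrightarrow>
           (\<forall>\<^sub>F n in sequentially. p n \<ge> c * (ln (real n) / real n) powr (1 / real \<Delta>)) \<longrightarrow>
           ((\<lambda>n. measure_pmf.prob (Gnp n (p n)) {G. stars_good n (p n) \<Delta> \<nu> G})
              \<longlonglongrightarrow> 1)"
proof -
  define c where "c = 1 + (real \<Delta> + 2) / \<nu>\<^sup>2"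
  show ?thesis
  proof (intro exI[of _ c] allI impI)
    fix p :: "nat \<Rightarrow> real"
    assume p: "\<forall>n. 0 \<le> p n \<and> p n \<le> 1"
      and ev: "\<forall>\<^sub>F n in sequentially. p n \<ge> c * (ln (real n) / real n) powr (1 / real \<Delta>)"
    define bad where "bad n = measure_pmf.prob (Gnp n (p n)) {G. \<not> stars_good n (p n) \<Delta> \<nu> G}" for n
    have evb: "\<forall>\<^sub>F n in sequentially. bad n \<le> 4 / real n"
      using ev eventually_ge_at_top[of 2]
    proof eventually_elim
      case (elim n)
      have "bad n \<le> 4 / (real n)\<^sup>2" unfolding bad_def
        by (rule bad_bound[OF assms c_def]) (use elim p in auto)
      also have "4 / (real n)\<^sup>2 \<le> 4 / real n"
      proof (rule divide_left_mono)
        have "real n * 1 \<le> real n * real n" using elim by (intro mult_left_mono) auto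
        thus "real n \<le> (real n)\<^sup>2" by (simp add: power2_eq_square)
      qed (use elim in auto)
      finally show ?case .
    qed
    have lim0: "(\<lambda>n. 4 / real n) \<longlonglongrightarrow> 0" by (rule lim_const_over_n)
    have limb: "bad \<longlonglongrightarrow> 0"
      by (rule tendsto_sandwich[OF _ evb tendsto_const lim0]) (simp add: bad_def)
    have eq: "measure_pmf.prob (Gnp n (p n)) {G. stars_good n (p n) \<Delta> \<nu> G} = 1 - bad n" for n
    proof -
      have "measure_pmf.prob (Gnp n (p n)) (space (measure_pmf (Gnp n (p n))) - {G. \<not> stars_good n (p n) \<Delta> \<nu> G}) = 1 - bad n"
        unfolding bad_def by (rule measure_pmf.prob_compl) simp
      moreover have "space (measure_pmf (Gnp n (p n))) - {G. \<not> stars_good n (p n) \<Delta> \<nu> G} = {G. stars_good n (p n) \<Delta> \<nu> G}"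
        by auto
      ultimately show ?thesis by simp
    qed
    have "(\<lambda>n. 1 - bad n) \<longlonglongrightarrow> 1 - 0" by (intro tendsto_diff tendsto_const limb)
    thus "(\<lambda>n. measure_pmf.prob (Gnp n (p n)) {G. stars_good n (p n) \<Delta> \<nu> G}) \<longlonglongrightarrow> 1"
      by (simp add: eq)
  qed
qed
end
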